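(* Let $\Gamma$ be a finite graph. The graph obtained from $\Gamma$ by repeatedly performing twin reductions (in any order) until no pair of twins remains is unique up to isomorphism, independent of the chosen sequence of reductions.
   Context: Graphs are simple (no loops). Two distinct vertices $v,w$ are open twins if they have the same open neighbourhoods (sets of adjacent vertices), and closed twins if they have the same closed neighbourhoods (neighbourhood together with the vertex itself); they are twins if they are open or closed twins. A twin reduction step takes a pair of twins $v,w$ and merges them into a single vertex, i.e. deletes one of them. A graph is twin-free if it has no pair of twins. The resulting twin-free graph is called the cokernel of $\Gamma$. *)

theory Defs
  imports Main
begin

text \<open>Subgraphs arising by deleting vertices are
  the induced subgraphs on subsets S of V, i.e. (S, E restricted to S).\<close>

definition simple_graph :: "'a set \<Rightarrow> ('a \<Rightarrow> 'a \<Rightarrow> bool) \<Rightarrow> bool" where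
  "simple_graph V E \<longleftrightarrow> finite V \<and> (\<forall>x\<in>V. \<forall>y\<in>V. E x y \<longleftrightarrow> E y x) \<and> (\<forall>x\<in>V. \<not> E x x)"

definition open_nbhd :: "'a set \<Rightarrow> ('a \<Rightarrow> 'a \<Rightarrow> bool) \<Rightarrow> 'a \<Rightarrow> 'a set" where
  "open_nbhd V E v = {u \<in> V. E v u}"

definition closed_nbhd :: "'a set \<Rightarrow> ('a \<Rightarrow> 'a \<Rightarrow> bool) \<Rightarrow> 'a \<Rightarrow> 'a set" where
  "closed_nbhd V E v = insert v (open_nbhd V E v)"

definition open_twins :: "'a set \<Rightarrow> ('a \<Rightarrow> 'a \<Rightarrow> bool) \<Rightarrow> 'a \<Rightarrow> 'a \<Rightarrow> bool" where
  "open_twins V E v w \<longleftrightarrow> v \<in> V \<and> w \<in> V \<and> v \<noteq> w \<and> open_nbhd V E v = open_nbhd V E w"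

definition closed_twins :: "'a set \<Rightarrow> ('a \<Rightarrow> 'a \<Rightarrow> bool) \<Rightarrow> 'a \<Rightarrow> 'a \<Rightarrow> bool" where
  "closed_twins V E v w \<longleftrightarrow> v \<in> V \<and> w \<in> V \<and> v \<noteq> w \<and> closed_nbhd V E v = closed_nbhd V E w"

definition twins :: "'a set \<Rightarrow> ('a \<Rightarrow> 'a \<Rightarrow> bool) \<Rightarrow> 'a \<Rightarrow> 'a \<Rightarrow> bool" where
  "twins V E v w \<longleftrightarrow> open_twins V E v w \<or> closed_twins V E v w"

definition twin_free :: "'a set \<Rightarrow> ('a \<Rightarrow> 'a \<Rightarrow> bool) \<Rightarrow> bool" where
  "twin_free V E \<longleftrightarrow> \<not> (\<exists>v w. twins V E v w)"

definition twin_reduction_step :: "('a \<Rightarrow> 'a \<Rightarrow> bool) \<Rightarrow> 'a set \<Rightarrow> 'a set \<Rightarrow> bool" where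
  "twin_reduction_step E V V' \<longleftrightarrow> (\<exists>v w. twins V E v w \<and> V' = V - {w})"

definition twin_reduces :: "('a \<Rightarrow> 'a \<Rightarrow> bool) \<Rightarrow> 'a set \<Rightarrow> 'a set \<Rightarrow> bool" where
  "twin_reduces E = (twin_reduction_step E)\<^sup>*\<^sup>*"

definition graph_iso :: "'a set \<Rightarrow> ('a \<Rightarrow> 'a \<Rightarrow> bool) \<Rightarrow> 'a set \<Rightarrow> ('a \<Rightarrow> 'a \<Rightarrow> bool) \<Rightarrow> bool" where
  "graph_iso V1 E1 V2 E2 \<longleftrightarrow>
     (\<exists>f. bij_betw f V1 V2 \<and> (\<forall>x\<in>V1. \<forall>y\<in>V1. E1 x y \<longleftrightarrow> E2 (f x) (f y)))"

end

theory Submission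
  imports Defs
begin

lemma simple_sub: "simple_graph V E \<Longrightarrow> U \<subseteq> V \<Longrightarrow> simple_graph U E"
  unfolding simple_graph_def by (auto intro: finite_subset)

lemma twins_sym: "twins V E a b \<Longrightarrow> twins V E b a"
  unfolding twins_def open_twins_def closed_twins_def by auto

lemma twins_in: "twins V E a b \<Longrightarrow> a \<in> V \<and> b \<in> V \<and> a \<noteq> b"
  unfolding twins_def open_twins_def closed_twins_def by auto

lemma reduces_sub: "twin_reduces E V U \<Longrightarrow> U \<subseteq> V"
  unfolding twin_reduces_def
proof (induction rule: rtranclp_induct)
  case base then show ?case by simp
next
  case (step y z) then show ?case unfolding twin_reduction_step_def by auto
qed

lemma reduces_free: "twin_reduces E V U \<Longrightarrow> twin_free V E \<Longrightarrow> U = V"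
  unfolding twin_reduces_def
  by (erule converse_rtranclpE) (auto simp: twin_reduction_step_def twin_free_def)

lemma twins_persist:
  assumes "twins V E a b" "u \<noteq> a" "u \<noteq> b"
  shows "twins (V - {u}) E a b"
proof -
  have o: "open_nbhd (V - {u}) E x = open_nbhd V E x - {u}" for x
    unfolding open_nbhd_def by auto
  have c: "closed_nbhd (V - {u}) E x = (if x = u then insert u (open_nbhd V E x - {u}) else closed_nbhd V E x - {u})" for x
    unfolding closed_nbhd_def o by auto
  show ?thesis using assms unfolding twins_def open_twins_def closed_twins_def o c
    by auto
qed

lemma exists_free: "finite V \<Longrightarrow> \<exists>U. twin_reduces E V U \<and> twin_free U E"
proof (induction "card V" arbitrary: V rule: less_induct)
  case less
  show ?case
  proof (cases "twin_free V E")
    case True then show ?thesis unfolding twin_reduces_def by auto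
  next
    case False
    then obtain v w where t: "twins V E v w" unfolding twin_free_def by auto
    then have "w \<in> V" using twins_in[OF t] by auto
    then have "card (V - {w}) < card V" using less.prems by (metis card_Diff1_less)
    then obtain U where "twin_reduces E (V - {w}) U" "twin_free U E"
      using less by auto
    moreover have "twin_reduction_step E V (V - {w})" unfolding twin_reduction_step_def using t by auto
    ultimately show ?thesis unfolding twin_reduces_def
      by (meson converse_rtranclp_into_rtranclp)
  qed
qed

lemma iso_refl: "graph_iso V E V E"
  unfolding graph_iso_def by (rule exI[of _ id]) auto

lemma iso_sym: assumes "graph_iso A E B E" shows "graph_iso B E A E"
proof -
  obtain f where f: "bij_betw f A B" "\<forall>x\<in>A. \<forall>y\<in>A. E x y \<longleftrightarrow> E (f x) (f y)"
    using assms unfolding graph_iso_def by auto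
  let ?g = "inv_into A f"
  have "bij_betw ?g B A" using f(1) by (rule bij_betw_inv_into)
  moreover have "\<forall>x\<in>B. \<forall>y\<in>B. E x y \<longleftrightarrow> E (?g x) (?g y)"
  proof (intro ballI)
    fix x y assume "x \<in> B" "y \<in> B"
    then have "?g x \<in> A" "?g y \<in> A" "f (?g x) = x" "f (?g y) = y"
      using f(1) by (auto simp: bij_betw_def inv_into_into f_inv_into_f)
    then show "E x y \<longleftrightarrow> E (?g x) (?g y)" using f(2) by metis
  qed
  ultimately show ?thesis unfolding graph_iso_def by blast
qed

lemma iso_trans: assumes "graph_iso A E B E" "graph_iso B E C E" shows "graph_iso A E C E"
proof -
  obtain f where f: "bij_betw f A B" "\<forall>x\<in>A. \<forall>y\<in>A. E x y \<longleftrightarrow> E (f x) (f y)"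
    using assms unfolding graph_iso_def by auto
  obtain g where g: "bij_betw g B C" "\<forall>x\<in>B. \<forall>y\<in>B. E x y \<longleftrightarrow> E (g x) (g y)"
    using assms unfolding graph_iso_def by auto
  have "bij_betw (g \<circ> f) A C" using f(1) g(1) by (rule bij_betw_trans)
  moreover have "\<forall>x\<in>A. \<forall>y\<in>A. E x y \<longleftrightarrow> E ((g \<circ> f) x) ((g \<circ> f) y)"
    using f g bij_betwE[OF f(1)] by auto
  ultimately show ?thesis unfolding graph_iso_def by blast
qed

locale invol =
  fixes \<sigma> :: "'a \<Rightarrow> 'a" and V :: "'a set" and E :: "'a \<Rightarrow> 'a \<Rightarrow> bool"
  assumes inv: "\<And>x. \<sigma> (\<sigma> x) = x"
    and img: "\<sigma> ` V = V"
    and pres: "\<And>x y. x \<in> V \<Longrightarrow> y \<in> V \<Longrightarrow> E x y \<longleftrightarrow> E (\<sigma> x) (\<sigma> y)"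
begin

lemma inj: "inj \<sigma>" by (metis inv injI)

lemma in_V: "x \<in> V \<Longrightarrow> \<sigma> x \<in> V" using img by auto

lemma open_img: assumes "U \<subseteq> V" "a \<in> U"
  shows "open_nbhd (\<sigma> ` U) E (\<sigma> a) = \<sigma> ` open_nbhd U E a"
  using assms pres unfolding open_nbhd_def by (auto simp: subset_iff)

lemma twins_img: assumes "U \<subseteq> V" "twins U E a b"
  shows "twins (\<sigma> ` U) E (\<sigma> a) (\<sigma> b)"
proof -
  have ab: "a \<in> U" "b \<in> U" "a \<noteq> b" using twins_in[OF assms(2)] by auto
  have ne: "\<sigma> a \<noteq> \<sigma> b" using ab inj by (auto dest: injD)
  show ?thesis using assms(2) ab ne
    unfolding twins_def open_twins_def closed_twins_def closed_nbhd_def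
      open_img[OF assms(1) ab(1)] open_img[OF assms(1) ab(2)]
    by (metis image_insert image_eqI)
qed

lemma step_img: assumes "U \<subseteq> V" "twin_reduction_step E U U'"
  shows "twin_reduction_step E (\<sigma> ` U) (\<sigma> ` U')"
proof -
  obtain a b where t: "twins U E a b" "U' = U - {b}"
    using assms(2) unfolding twin_reduction_step_def by auto
  have "\<sigma> ` U' = \<sigma> ` U - {\<sigma> b}" using t(2) inj by (simp add: image_set_diff)
  then show ?thesis unfolding twin_reduction_step_def using twins_img[OF assms(1) t(1)] by blast
qed

lemma reduces_img: assumes "twin_reduces E U U'" "U \<subseteq> V"
  shows "twin_reduces E (\<sigma> ` U) (\<sigma> ` U')"
  using assms(1) unfolding twin_reduces_def
proof (induction rule: rtranclp_induct)
  case base then show ?case by simp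
next
  case (step y z)
  have "y \<subseteq> V" using step(1) assms(2) reduces_sub unfolding twin_reduces_def by blast
  then have "twin_reduction_step E (\<sigma> ` y) (\<sigma> ` z)" using step_img step(2) by blast
  with step(3) show ?case by (rule rtranclp.rtrancl_into_rtrancl)
qed

lemma free_img: assumes "twin_free U E" "U \<subseteq> V"
  shows "twin_free (\<sigma> ` U) E"
proof (rule ccontr)
  assume "\<not> twin_free (\<sigma> ` U) E"
  then obtain a b where t: "twins (\<sigma> ` U) E a b" unfolding twin_free_def by auto
  have s: "\<sigma> ` U \<subseteq> V" using assms(2) img by auto
  have "\<sigma> ` \<sigma> ` U = U" using inv by (simp add: image_comp comp_def)
  then have "twins U E (\<sigma> a) (\<sigma> b)" using twins_img[OF s t] by simp
  then show False using assms(1) unfolding twin_free_def by auto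
qed

lemma iso_img: assumes "U \<subseteq> V" shows "graph_iso U E (\<sigma> ` U) E"
  unfolding graph_iso_def
proof (intro exI conjI)
  show "bij_betw \<sigma> U (\<sigma> ` U)" using inj by (simp add: bij_betw_imageI inj_on_subset)
  show "\<forall>x\<in>U. \<forall>y\<in>U. E x y = E (\<sigma> x) (\<sigma> y)" using assms pres by auto
qed

end

lemma swap_invol:
  assumes sg: "simple_graph V E" and t: "twins V E w w'"
  shows "invol (\<lambda>x. if x = w then w' else if x = w' then w else x) V E"
proof -
  have ww: "w \<in> V" "w' \<in> V" "w \<noteq> w'" using twins_in[OF t] by auto
  have sym: "\<And>x y. x \<in> V \<Longrightarrow> y \<in> V \<Longrightarrow> E x y \<longleftrightarrow> E y x"
    and irr: "\<And>x. x \<in> V \<Longrightarrow> \<not> E x x" using sg unfolding simple_graph_def by auto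
  have nb: "E w y \<longleftrightarrow> E w' y" if "y \<in> V" "y \<noteq> w" "y \<noteq> w'" for y
    using t that unfolding twins_def open_twins_def closed_twins_def closed_nbhd_def open_nbhd_def
    by (metis (mono_tags, lifting) insert_iff mem_Collect_eq)
  have nb2: "E y w \<longleftrightarrow> E y w'" if "y \<in> V" "y \<noteq> w" "y \<noteq> w'" for y
    using nb[OF that] sym[OF that(1) ww(1)] sym[OF that(1) ww(2)] by blast
  have ww2: "E w w' \<longleftrightarrow> E w' w" using sym ww by blast
  show ?thesis
  proof
    show "\<And>x. (if (if x = w then w' else if x = w' then w else x) = w then w'
          else if (if x = w then w' else if x = w' then w else x) = w' then w
          else (if x = w then w' else if x = w' then w else x)) = x" by auto
    show "(\<lambda>x. if x = w then w' else if x = w' then w else x) ` V = V"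
      using ww by (auto simp: image_iff)
    fix x y assume xy: "x \<in> V" "y \<in> V"
    show "E x y \<longleftrightarrow> E (if x = w then w' else if x = w' then w else x) (if y = w then w' else if y = w' then w else y)"
      using xy ww nb nb2 ww2 irr by (cases "x = w"; cases "x = w'"; cases "y = w"; cases "y = w'") auto
  qed
qed

lemma main:
  "finite V \<Longrightarrow> simple_graph V E \<Longrightarrow> twin_reduces E V V1 \<Longrightarrow> twin_free V1 E
   \<Longrightarrow> twin_reduces E V V2 \<Longrightarrow> twin_free V2 E \<Longrightarrow> graph_iso V1 E V2 E"
proof (induction "card V" arbitrary: V V1 V2 rule: less_induct)
  case less
  show ?case
  proof (cases "twin_free V E")
    case True
    then show ?thesis using reduces_free less.prems iso_refl by metis
  next
    case False
    from less.prems(3) obtain X where s1: "twin_reduction_step E V X" and r1: "twin_reduces E X V1"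
      using False reduces_free[of E V V1] less.prems(4) unfolding twin_reduces_def
      by (metis converse_rtranclpE)
    from less.prems(5) obtain Y where s2: "twin_reduction_step E V Y" and r2: "twin_reduces E Y V2"
      using False reduces_free[of E V V2] less.prems(6) unfolding twin_reduces_def
      by (metis converse_rtranclpE)
    obtain v w where t1: "twins V E v w" and X: "X = V - {w}" using s1 unfolding twin_reduction_step_def by auto
    obtain v' w' where t2: "twins V E v' w'" and Y: "Y = V - {w'}" using s2 unfolding twin_reduction_step_def by auto
    have wV: "w \<in> V" "w' \<in> V" using twins_in[OF t1] twins_in[OF t2] by auto
    have cX: "card X < card V" using X wV less.prems(1) by (metis card_Diff1_less)
    have cY: "card Y < card V" using Y wV less.prems(1) by (metis card_Diff1_less)
    have fX: "finite X" "simple_graph X E" using X less.prems(1,2) simple_sub[of V E X] by auto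
    have fY: "finite Y" "simple_graph Y E" using Y less.prems(1,2) simple_sub[of V E Y] by auto
    have IHX: "\<And>A B. twin_reduces E X A \<Longrightarrow> twin_free A E \<Longrightarrow> twin_reduces E X B \<Longrightarrow> twin_free B E
      \<Longrightarrow> graph_iso A E B E" using less.hyps[OF cX] fX by blast
    have IHY: "\<And>A B. twin_reduces E Y A \<Longrightarrow> twin_free A E \<Longrightarrow> twin_reduces E Y B \<Longrightarrow> twin_free B E
      \<Longrightarrow> graph_iso A E B E" using less.hyps[OF cY] fY by blast
    show ?thesis
    proof (cases "w = w'")
      case True
      then show ?thesis using IHX r1 r2 X Y less.prems by auto
    next
      case ne: False
      show ?thesis
      proof (cases "twins V E w w'")
        case True
        define \<sigma> where "\<sigma> = (\<lambda>x. if x = w then w' else if x = w' then w else x)"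
        interpret invol \<sigma> V E unfolding \<sigma>_def by (rule swap_invol[OF less.prems(2) True])
        have YX: "\<sigma> ` Y = X" unfolding Y X \<sigma>_def using wV ne
          by (auto simp: image_iff)
        have YV: "Y \<subseteq> V" "V2 \<subseteq> V" using Y reduces_sub[OF r2] by auto
        have a: "twin_reduces E X (\<sigma> ` V2)" using reduces_img[OF r2 YV(1)] YX by simp
        have b: "twin_free (\<sigma> ` V2) E" using free_img less.prems(6) YV(2) by blast
        have "graph_iso V1 E (\<sigma> ` V2) E" using IHX[OF r1 less.prems(4) a b] .
        moreover have "graph_iso (\<sigma> ` V2) E V2 E" using iso_sym iso_img YV(2) by blast
        ultimately show ?thesis by (rule iso_trans)
      next
        case False
        have "w \<noteq> v'" using False t2 by auto
        have "w' \<noteq> v" using False twins_sym[OF t1] by blast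
        define Z where "Z = V - {w} - {w'}"
        have sXZ: "twin_reduction_step E X Z"
          unfolding twin_reduction_step_def X Z_def
          using twins_persist[OF t2 \<open>w \<noteq> v'\<close> ne] by blast
        have sYZ: "twin_reduction_step E Y Z"
          unfolding twin_reduction_step_def Y Z_def
          using twins_persist[OF t1 \<open>w' \<noteq> v\<close>] ne
          by (metis Diff_insert2 insert_commute)
        obtain T where T: "twin_reduces E Z T" "twin_free T E"
          using exists_free[of Z E] less.prems(1) Z_def by auto
        have rXT: "twin_reduces E X T" using sXZ T(1) unfolding twin_reduces_def
          by (meson converse_rtranclp_into_rtranclp)
        have rYT: "twin_reduces E Y T" using sYZ T(1) unfolding twin_reduces_def
          by (meson converse_rtranclp_into_rtranclp)
        have "graph_iso V1 E T E" using IHX[OF r1 less.prems(4) rXT T(2)] .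
        moreover have "graph_iso T E V2 E" using IHY[OF rYT T(2) r2 less.prems(6)] .
        ultimately show ?thesis by (rule iso_trans)
      qed
    qed
  qed
qed

theorem mainTheorem15:
  fixes V V1 V2 :: "'a set" and E :: "'a \<Rightarrow> 'a \<Rightarrow> bool"
  assumes "simple_graph V E"
    and "twin_reduces E V V1" and "twin_free V1 E"
    and "twin_reduces E V V2" and "twin_free V2 E"
  shows "graph_iso V1 E V2 E"
  using main[of V E V1 V2] assms unfolding simple_graph_def by (simp add: assms(1))

end
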